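(* Let $\eta>0$, $n\ge1$, $b\in\{1,\dots,n\}$. Let $X_n=(x_1,\dots,x_n)$ and $\hat X_n=(\hat x_1,\dots,\hat x_n)$ with $x_i=(a_i,y_i)$, $\hat x_i=(\hat a_i,\hat y_i)\in\mathcal{X}\subseteq\mathbb{R}^d\times\mathbb{R}$, such that $x_i=\hat x_i$ for all but at most one index $i$. Assume $\sup_{x\in\mathcal{X}}\Vert x\Vert\le D<\infty$. Let $(\Omega_k)_{k\ge1}$ be i.i.d. uniformly random subsets of $\{1,\dots,n\}$ of cardinality $b$, and let $P$ and $\hat P$ be the transition kernels of the chains $\theta_k=\left(I-\frac{\eta}{b}H_k\right)\theta_{k-1}+\frac{\eta}{b}q_k$ and $\hat\theta_k=\left(I-\frac{\eta}{b}\hat H_k\right)\hat\theta_{k-1}+\frac{\eta}{b}\hat q_k$, where $H_k=\sum_{i\in\Omega_k}a_ia_i^\top$, $q_k=\sum_{i\in\Omega_k}a_iy_i$, $\hat H_k=\sum_{i\in\Omega_k}\hat a_i\hat a_i^\top$, $\hat q_k=\sum_{i\in\Omega_k}\hat a_i\hat y_i$. Let $\hat V(\theta)=1+\Vert\theta\Vert$. Then $$\sup_{\theta\in\mathbb{R}^d}\frac{\mathcal{W}_1(\delta_\theta P,\delta_\theta\hat P)}{\hat V(\theta)}\le\frac{2\eta D^2}{n}.$$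
   Context: $\delta_\theta P$ denotes $P(\theta,\cdot)$, the law of one step of the chain started at $\theta$. $\mathcal{W}_1$ is the 1-Wasserstein distance $\inf\mathbb{E}\Vert X-Y\Vert$ over couplings. *)

theory Defs
  imports "HOL-Analysis.Analysis" "HOL-Probability.Probability"
begin

definition outer :: "real^'d \<Rightarrow> real^'d^'d" where
  "outer u = (\<chi> i j. u$i * u$j)"

definition batches :: "nat \<Rightarrow> nat \<Rightarrow> nat set set" where
  "batches n b = {\<Omega>. \<Omega> \<subseteq> {1..n} \<and> card \<Omega> = b}"

definition sgd_step :: "real \<Rightarrow> nat \<Rightarrow> (nat \<Rightarrow> real^'d) \<Rightarrow> (nat \<Rightarrow> real)
    \<Rightarrow> nat set \<Rightarrow> real^'d \<Rightarrow> real^'d" where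
  "sgd_step \<eta> b a y \<Omega> \<theta> =
     (mat 1 - (\<eta> / real b) *\<^sub>R (\<Sum>i\<in>\<Omega>. outer (a i))) *v \<theta>
     + (\<eta> / real b) *\<^sub>R (\<Sum>i\<in>\<Omega>. y i *\<^sub>R a i)"

definition sgd_kernel :: "real \<Rightarrow> nat \<Rightarrow> nat \<Rightarrow> (nat \<Rightarrow> real^'d) \<Rightarrow> (nat \<Rightarrow> real)
    \<Rightarrow> real^'d \<Rightarrow> (real^'d) pmf" where
  "sgd_kernel \<eta> n b a y \<theta> =
     map_pmf (\<lambda>\<Omega>. sgd_step \<eta> b a y \<Omega> \<theta>) (pmf_of_set (batches n b))"

definition W1 :: "('a::metric_space) pmf \<Rightarrow> 'a pmf \<Rightarrow> ennreal" where
  "W1 p q = (INF \<pi> \<in> {\<pi>. map_pmf fst \<pi> = p \<and> map_pmf snd \<pi> = q}.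
               \<integral>\<^sup>+ z. ennreal (dist (fst z) (snd z)) \<partial>(measure_pmf \<pi>))"

end

theory Submission
  imports Defs
begin

lemma outer_mult: "outer u *v \<theta> = (u \<bullet> \<theta>) *\<^sub>R u"
  by (simp add: outer_def matrix_vector_mult_def inner_vec_def vec_eq_iff sum_distrib_left
      mult_ac)

lemma norm_outer_mult: "norm (outer u *v \<theta>) \<le> norm u ^ 2 * norm \<theta>"
proof -
  have "norm (outer u *v \<theta>) = \<bar>u \<bullet> \<theta>\<bar> * norm u" by (simp add: outer_mult)
  also have "\<dots> \<le> (norm u * norm \<theta>) * norm u"
    by (intro mult_right_mono Cauchy_Schwarz_ineq2) auto
  finally show ?thesis by (simp add: power2_eq_square mult_ac)
qed

lemma step_diff:
  assumes "finite \<Omega>0" "j \<notin> \<Omega>0" "\<forall>i\<in>\<Omega>0. a i = ah i \<and> y i = yh i"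
  shows "sgd_step \<eta> b a y (insert j \<Omega>0) \<theta> - sgd_step \<eta> b ah yh (insert j \<Omega>0) \<theta>
     = (\<eta> / real b) *\<^sub>R ((y j *\<^sub>R a j - yh j *\<^sub>R ah j) - (outer (a j) *v \<theta> - outer (ah j) *v \<theta>))"
proof -
  have s1: "(\<Sum>i\<in>\<Omega>0. outer (a i)) = (\<Sum>i\<in>\<Omega>0. outer (ah i))"
    using assms(3) by (intro sum.cong) auto
  have s2: "(\<Sum>i\<in>\<Omega>0. y i *\<^sub>R a i) = (\<Sum>i\<in>\<Omega>0. yh i *\<^sub>R ah i)"
    using assms(3) by (intro sum.cong) auto
  show ?thesis
    unfolding sgd_step_def using assms(1,2)
    by (simp add: s1 s2 matrix_vector_mult_diff_rdistrib matrix_vector_mult_add_rdistrib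
        scaleR_matrix_vector_assoc[symmetric] algebra_simps)
qed

lemma pair_bounds:
  fixes u :: "real^'d" and v D :: real
  assumes "norm (u, v) \<le> D"
  shows "norm u ^ 2 \<le> D^2" "\<bar>v\<bar> * norm u \<le> D^2 / 2"
proof -
  have h: "norm u ^ 2 + v^2 \<le> D^2"
  proof -
    have "sqrt (norm u ^ 2 + v^2) \<le> D" using assms by (simp add: norm_Pair)
    hence "(sqrt (norm u ^ 2 + v^2))^2 \<le> D^2"
      by (intro power_mono) auto
    thus ?thesis by simp
  qed
  show "norm u ^ 2 \<le> D^2" using h by (smt (verit) zero_le_power2)
  have "2 * (\<bar>v\<bar> * norm u) \<le> v^2 + norm u ^2"
    using sum_squares_bound[of "\<bar>v\<bar>" "norm u"] by (simp add: power2_eq_square)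
  then show "\<bar>v\<bar> * norm u \<le> D^2 / 2" using h by linarith
qed

lemma dist_bound:
  assumes "finite \<Omega>" "j \<in> \<Omega>" "\<forall>i\<in>\<Omega>-{j}. a i = ah i \<and> y i = yh i"
    and "norm (a j, y j) \<le> D" "norm (ah j, yh j) \<le> D" "\<eta> > 0"
  shows "dist (sgd_step \<eta> b a y \<Omega> \<theta>) (sgd_step \<eta> b ah yh \<Omega> \<theta>)
     \<le> (\<eta> / real b) * (2 * D^2 * (1 + norm \<theta>))"
proof -
  have \<Omega>: "\<Omega> = insert j (\<Omega> - {j})" using assms(2) by auto
  have e: "sgd_step \<eta> b a y \<Omega> \<theta> - sgd_step \<eta> b ah yh \<Omega> \<theta>
     = (\<eta> / real b) *\<^sub>R ((y j *\<^sub>R a j - yh j *\<^sub>R ah j) - (outer (a j) *v \<theta> - outer (ah j) *v \<theta>))"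
    using step_diff[of "\<Omega> - {j}" j a ah y yh \<eta> b \<theta>] assms(1,3) \<Omega> by auto
  have c: "\<eta> / real b \<ge> 0" using assms(6) by simp
  have n1: "norm (y j *\<^sub>R a j) \<le> D^2/2" using pair_bounds(2)[OF assms(4)] by simp
  have n2: "norm (yh j *\<^sub>R ah j) \<le> D^2/2" using pair_bounds(2)[OF assms(5)] by simp
  have n3: "norm (outer (a j) *v \<theta>) \<le> D^2 * norm \<theta>"
    using norm_outer_mult[of "a j" \<theta>] pair_bounds(1)[OF assms(4)]
    by (meson dual_order.trans mult_right_mono norm_ge_zero)
  have n4: "norm (outer (ah j) *v \<theta>) \<le> D^2 * norm \<theta>"
    using norm_outer_mult[of "ah j" \<theta>] pair_bounds(1)[OF assms(5)]
    by (meson dual_order.trans mult_right_mono norm_ge_zero)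
  have "norm ((y j *\<^sub>R a j - yh j *\<^sub>R ah j) - (outer (a j) *v \<theta> - outer (ah j) *v \<theta>))
     \<le> 2 * D^2 * (1 + norm \<theta>)"
  proof -
    have "norm ((y j *\<^sub>R a j - yh j *\<^sub>R ah j) - (outer (a j) *v \<theta> - outer (ah j) *v \<theta>))
       \<le> norm (y j *\<^sub>R a j) + norm (yh j *\<^sub>R ah j) + norm (outer (a j) *v \<theta>) + norm (outer (ah j) *v \<theta>)"
      by (smt (verit) norm_triangle_ineq4)
    moreover have "2 * D^2 * (1 + norm \<theta>) \<ge> D^2/2 + D^2/2 + D^2 * norm \<theta> + D^2 * norm \<theta>"
      by (simp add: algebra_simps)
    ultimately show ?thesis using n1 n2 n3 n4 by linarith
  qed
  then have "\<bar>\<eta> / real b\<bar> * norm ((y j *\<^sub>R a j - yh j *\<^sub>R ah j) - (outer (a j) *v \<theta> - outer (ah j) *v \<theta>))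
     \<le> (\<eta> / real b) * (2 * D^2 * (1 + norm \<theta>))"
    using c by (simp only: abs_of_nonneg[OF c]) (rule mult_left_mono)
  then show ?thesis unfolding dist_norm e norm_scaleR .
qed

lemma card_batches_with:
  assumes "j \<in> {1..n}" "b \<in> {1..n}"
  shows "real (card {\<Omega>\<in>batches n b. j \<in> \<Omega>}) * real n = real b * real (card (batches n b))"
proof -
  have cB: "card (batches n b) = n choose b"
    unfolding batches_def using n_subsets[of "{1..n}" b] by simp
  have eq: "{\<Omega>\<in>batches n b. j \<in> \<Omega>} = insert j ` {\<Omega>'. \<Omega>' \<subseteq> {1..n}-{j} \<and> card \<Omega>' = b - 1}"
  proof (intro equalityI subsetI)
    fix \<Omega> assume "\<Omega> \<in> {\<Omega>\<in>batches n b. j \<in> \<Omega>}"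
    hence h: "\<Omega> \<subseteq> {1..n}" "card \<Omega> = b" "j \<in> \<Omega>" by (auto simp: batches_def)
    have f: "finite \<Omega>" using h(1) finite_subset by blast
    have "\<Omega> = insert j (\<Omega> - {j})" using h(3) by auto
    moreover have "\<Omega> - {j} \<subseteq> {1..n}-{j}" "card (\<Omega> - {j}) = b - 1" using h f by auto
    ultimately show "\<Omega> \<in> insert j ` {\<Omega>'. \<Omega>' \<subseteq> {1..n}-{j} \<and> card \<Omega>' = b - 1}" by blast
  next
    fix \<Omega> assume "\<Omega> \<in> insert j ` {\<Omega>'. \<Omega>' \<subseteq> {1..n}-{j} \<and> card \<Omega>' = b - 1}"
    then obtain \<Omega>' where h: "\<Omega> = insert j \<Omega>'" "\<Omega>' \<subseteq> {1..n}-{j}" "card \<Omega>' = b - 1" by auto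
    have f: "finite \<Omega>'" using h(2) finite_subset by blast
    have "card \<Omega> = b" using h f assms(2) by (auto simp: card_insert_if)
    thus "\<Omega> \<in> {\<Omega>\<in>batches n b. j \<in> \<Omega>}" using h assms(1) by (auto simp: batches_def)
  qed
  have inj: "inj_on (insert j) {\<Omega>'. \<Omega>' \<subseteq> {1..n}-{j} \<and> card \<Omega>' = b - 1}"
    by (intro inj_onI) (metis Diff_insert_absorb insert_subset mem_Collect_eq subset_Diff_insert)
  have "card {\<Omega>\<in>batches n b. j \<in> \<Omega>} = (n - 1) choose (b - 1)"
    unfolding eq card_image[OF inj] using n_subsets[of "{1..n}-{j}" "b-1"] assms(1) by simp
  moreover have "b * (n choose b) = n * ((n - 1) choose (b - 1))"
  proof -
    obtain k where "b = Suc k" using assms(2) by (cases b) auto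
    thus ?thesis using binomial_absorption[of k n] by simp
  qed
  ultimately show ?thesis unfolding cB by (metis of_nat_mult mult.commute)
qed

theorem lemma3p3:
  fixes \<eta> D :: real and n b :: nat
    and a ah :: "nat \<Rightarrow> real^'d" and y yh :: "nat \<Rightarrow> real"
  assumes "\<eta> > 0" and "n \<ge> 1" and "b \<in> {1..n}"
    and "card {i\<in>{1..n}. (a i, y i) \<noteq> (ah i, yh i)} \<le> 1"
    and "\<forall>i\<in>{1..n}. norm (a i, y i) \<le> D \<and> norm (ah i, yh i) \<le> D"
  shows "(SUP \<theta>\<in>UNIV. W1 (sgd_kernel \<eta> n b a y \<theta>) (sgd_kernel \<eta> n b ah yh \<theta>)
                      / ennreal (1 + norm \<theta>))
         \<le> ennreal (2 * \<eta> * D^2 / real n)"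
proof -
  define S where "S = {i\<in>{1..n}. (a i, y i) \<noteq> (ah i, yh i)}"
  have finS: "finite S" unfolding S_def by auto
  have Sle: "\<forall>x\<in>S. \<forall>z\<in>S. x = z"
    using assms(4) finS card_le_Suc0_iff_eq[of S] unfolding S_def[symmetric] by simp
  obtain j where j1: "j \<in> {1..n}" and jS: "S \<subseteq> {j}"
  proof (cases "S = {}")
    case True
    show ?thesis by (rule that[of 1]) (use True assms(2) in auto)
  next
    case False
    then obtain j where js: "j \<in> S" by blast
    have "j \<in> {1..n}" using js unfolding S_def by blast
    moreover have "S \<subseteq> {j}" using js Sle by blast
    ultimately show ?thesis by (rule that)
  qed
  have j2: "\<forall>i\<in>{1..n}-{j}. a i = ah i \<and> y i = yh i"
  proof
    fix i assume i: "i \<in> {1..n}-{j}"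
    hence "i \<notin> S" using jS by blast
    hence "(a i, y i) = (ah i, yh i)" using i unfolding S_def by blast
    thus "a i = ah i \<and> y i = yh i" by simp
  qed
  note j = j1 j2
  define B where "B = batches n b"
  have finB: "finite B" unfolding B_def batches_def by auto
  have Bne: "B \<noteq> {}"
  proof -
    have "card B = n choose b" unfolding B_def batches_def using n_subsets[of "{1..n}" b] by simp
    moreover have "n choose b > 0" using assms(3) by simp
    ultimately show ?thesis by auto
  qed
  have bpos: "real b > 0" using assms(3) by simp
  have npos: "real n > 0" using assms(2) by simp
  have Dj: "norm (a j, y j) \<le> D" "norm (ah j, yh j) \<le> D" using assms(5) j(1) by auto
  have key: "W1 (sgd_kernel \<eta> n b a y \<theta>) (sgd_kernel \<eta> n b ah yh \<theta>)
      \<le> ennreal (2 * \<eta> * D^2 / real n * (1 + norm \<theta>))" for \<theta>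
  proof -
    define C where "C = (\<eta> / real b) * (2 * D^2 * (1 + norm \<theta>))"
    define f where "f = (\<lambda>\<Omega>. dist (sgd_step \<eta> b a y \<Omega> \<theta>) (sgd_step \<eta> b ah yh \<Omega> \<theta>))"
    define \<pi> where "\<pi> = map_pmf (\<lambda>\<Omega>. (sgd_step \<eta> b a y \<Omega> \<theta>, sgd_step \<eta> b ah yh \<Omega> \<theta>)) (pmf_of_set B)"
    have "W1 (sgd_kernel \<eta> n b a y \<theta>) (sgd_kernel \<eta> n b ah yh \<theta>)
        \<le> \<integral>\<^sup>+ z. ennreal (dist (fst z) (snd z)) \<partial>(measure_pmf \<pi>)"
      unfolding W1_def
      by (rule INF_lower) (simp add: \<pi>_def sgd_kernel_def B_def map_pmf_comp)
    also have "\<dots> = (\<Sum>\<Omega>\<in>B. ennreal (f \<Omega>)) / of_nat (card B)"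
      unfolding \<pi>_def f_def using finB Bne by (simp add: nn_integral_pmf_of_set)
    also have "\<dots> = ennreal (sum f B / real (card B))"
    proof -
      have "(\<Sum>\<Omega>\<in>B. ennreal (f \<Omega>)) = ennreal (sum f B)"
        by (rule sum_ennreal) (simp add: f_def)
      moreover have "(of_nat (card B) :: ennreal) = ennreal (real (card B))"
        by (simp add: ennreal_of_nat_eq_real_of_nat)
      moreover have "real (card B) > 0" using finB Bne by (simp add: card_gt_0_iff)
      moreover have "sum f B \<ge> 0" by (rule sum_nonneg) (simp add: f_def)
      ultimately show ?thesis by (simp add: divide_ennreal)
    qed
    also have "\<dots> \<le> ennreal (2 * \<eta> * D^2 / real n * (1 + norm \<theta>))"
    proof (rule ennreal_leI)
      have fle: "f \<Omega> \<le> (if j \<in> \<Omega> then C else 0)" if "\<Omega> \<in> B" for \<Omega>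
      proof -
        have sub: "\<Omega> \<subseteq> {1..n}" and fin: "finite \<Omega>"
          using that unfolding B_def batches_def by (auto intro: finite_subset)
        show ?thesis
        proof (cases "j \<in> \<Omega>")
          case True
          have ag: "\<forall>i\<in>\<Omega>-{j}. a i = ah i \<and> y i = yh i" using j(2) sub by auto
          show ?thesis using dist_bound[OF fin True ag Dj assms(1)] True
            unfolding f_def C_def by simp
        next
          case False
          have ag: "\<forall>i\<in>\<Omega>. a i = ah i \<and> y i = yh i" using j(2) sub False by auto
          have e1: "(\<Sum>i\<in>\<Omega>. outer (a i)) = (\<Sum>i\<in>\<Omega>. outer (ah i))"
            using ag by (auto intro: sum.cong)
          have e2: "(\<Sum>i\<in>\<Omega>. y i *\<^sub>R a i) = (\<Sum>i\<in>\<Omega>. yh i *\<^sub>R ah i)"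
            using ag by (auto intro: sum.cong)
          have "sgd_step \<eta> b a y \<Omega> \<theta> = sgd_step \<eta> b ah yh \<Omega> \<theta>"
            unfolding sgd_step_def by (simp only: e1 e2)
          then have "f \<Omega> = 0" unfolding f_def by simp
          then show ?thesis using False by simp
        qed
      qed
      have "sum f B \<le> (\<Sum>\<Omega>\<in>B. if j \<in> \<Omega> then C else 0)"
        by (rule sum_mono) (rule fle)
      also have "\<dots> = C * real (card {\<Omega>\<in>B. j \<in> \<Omega>})"
        using finB by (simp add: sum.If_cases Int_def)
      finally have s: "sum f B \<le> C * real (card {\<Omega>\<in>B. j \<in> \<Omega>})" .
      have cc: "real (card {\<Omega>\<in>B. j \<in> \<Omega>}) * real n = real b * real (card B)"
        unfolding B_def using card_batches_with[OF j(1) assms(3)] .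
      have cBpos: "real (card B) > 0" using finB Bne by (simp add: card_gt_0_iff)
      have "sum f B / real (card B) \<le> C * real (card {\<Omega>\<in>B. j \<in> \<Omega>}) / real (card B)"
        using s cBpos by (simp add: divide_right_mono)
      also have "\<dots> = C * real b / real n"
        using cc cBpos npos by (simp add: field_simps)
      also have "\<dots> = 2 * \<eta> * D^2 / real n * (1 + norm \<theta>)"
        unfolding C_def using bpos npos by (simp add: field_simps)
      finally show "sum f B / real (card B) \<le> 2 * \<eta> * D^2 / real n * (1 + norm \<theta>)" .
    qed
    finally show ?thesis .
  qed
  show ?thesis
  proof (rule SUP_least)
    fix \<theta> :: "real^'d"
    have p: "1 + norm \<theta> > 0" by (simp add: add_pos_nonneg)
    have nn: "2 * \<eta> * D^2 / real n \<ge> 0" using assms(1) npos by simp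
    have "W1 (sgd_kernel \<eta> n b a y \<theta>) (sgd_kernel \<eta> n b ah yh \<theta>) / ennreal (1 + norm \<theta>)
        \<le> ennreal (2 * \<eta> * D^2 / real n * (1 + norm \<theta>)) / ennreal (1 + norm \<theta>)"
      by (rule divide_right_mono_ennreal[OF key])
    also have "\<dots> = ennreal (2 * \<eta> * D^2 / real n)"
    proof -
      have "ennreal (2 * \<eta> * D^2 / real n * (1 + norm \<theta>)) / ennreal (1 + norm \<theta>)
          = ennreal (2 * \<eta> * D^2 / real n * (1 + norm \<theta>) / (1 + norm \<theta>))"
        by (rule divide_ennreal) (use p nn in \<open>simp_all only: mult_nonneg_nonneg less_imp_le\<close>)
      also have "2 * \<eta> * D^2 / real n * (1 + norm \<theta>) / (1 + norm \<theta>) = 2 * \<eta> * D^2 / real n"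
        using p by (simp only: nonzero_mult_div_cancel_right less_irrefl)
      finally show ?thesis .
    qed
    finally show "W1 (sgd_kernel \<eta> n b a y \<theta>) (sgd_kernel \<eta> n b ah yh \<theta>) / ennreal (1 + norm \<theta>)
        \<le> ennreal (2 * \<eta> * D^2 / real n)" .
  qed
qed

end
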